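(* Assume the Standing setup and the Time series setup, suppose that $R(z)$ is analytic on $\mathcal V_\epsilon\cup\mathcal W_\theta$ for some $\epsilon>0$ and $\theta>0$, that $R$ has a pole of order $2$ at $z=1$ (i.e. $T_{-2}\ne0$ and $T_{-k}=0$ for $k\ge3$), and that $x(-1)=c=T_{-2}d$ for some $d\in Y$. Then for every integer $t\ge0$ $$x(t)=T_{-2}\nabla^{-2}g_+(t)-T_{-1}\nabla^{-1}g_+(t)+T_{-2}d+(t+1)T_{-2}C_0T_{-2}d+\sum_{s=0}^tV_s\,g(t-s),$$ where $\nabla^{-1}g_+(t)=\sum_{s=0}^tg(t-s)$ and $\nabla^{-2}g_+(t)=\sum_{s=0}^t(s+1)g(t-s)$. Moreover $T_{-2}(Y)\subseteq T_{-1}(Y)$, and for every $f\in X^*$ with $f(u)=0$ for all $u\in T_{-2}(Y)$ one has $f(x(t))=-f\big(T_{-1}\sum_{s=0}^tg(t-s)\big)+\sum_{s=0}^tf\big(V_sg(t-s)\big)$ for all $t\ge0$.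
   Context: Standing setup. Let $X,Y$ be complex Banach spaces, let $\mathcal B(X,Y)$ denote the bounded linear operators from $X$ to $Y$ ($\mathcal B(X)=\mathcal B(X,X)$), and let $I_X$ be the identity on $X$. Let $A_0,A_1\in\mathcal B(X,Y)$, let $A(z)=A_0+A_1z$ ($z\in\mathbb C$), and set $C_0=A_0+A_1$, $C_1=A_1$, so that $A(z)=C_0+C_1(z-1)$. Let $R(z)=A(z)^{-1}\in\mathcal B(Y,X)$ where this inverse exists. For $\epsilon>0$ let $\mathcal V_\epsilon=\{z\in\mathbb C:|z|<1+\epsilon,\ z\ne1\}$, and for $\theta>0$ let $\mathcal W_\theta=\{z\in\mathbb C:0<|z-1|<1+\theta\}$. If $R$ is analytic on $\mathcal V_\epsilon$ then it has a Laurent expansion $R(z)=\sum_{j\in\mathbb Z}T_j(z-1)^j$ on $0<|z-1|<\epsilon$ with $T_j\in\mathcal B(Y,X)$, and (known facts) $T_{-k}=(-1)^{k-1}(T_{-1}C_0)^{k-1}T_{-1}$ for $k\ge1$, $T_\ell=(-1)^\ell(T_0C_1)^\ell T_0$ for $\ell\ge0$, $\|(T_{-1}C_0)^k\|^{1/k}\to0$, $T_{-1}C_1+T_0C_0=I_X$, $C_1T_{-1}+C_0T_0=I_Y$, $T_{-1}C_iT_0=0$ and $T_0C_iT_{-1}=0$ for $i=0,1$; moreover $P=T_{-1}C_1$ and $P^c=I_X-P=T_0C_0$ are complementary projections on $X$ and $Q=C_1T_{-1}$, $Q^c=I_Y-Q=C_0T_0$ are complementary projections on $Y$. The singular part $R_{\rm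 sin}(z)=\sum_{k\ge1}T_{-k}(z-1)^{-k}$ converges for all $z\ne1$ and the regular part is $R_{\rm reg}(z)=\sum_{\ell\ge0}T_\ell(z-1)^\ell$. Define, for integers $s\ge0$, $U_s=-(I_X-T_{-1}C_0)^{-s-1}T_{-1}$ (these are the Maclaurin coefficients of $R_{\rm sin}$) and, whenever $I_X-T_0C_1$ is invertible, $V_s=(-1)^s(I_X-T_0C_1)^{-s-1}(T_0C_1)^sT_0$. Time series setup. Let $(\Omega,\Sigma,\mu)$ be a probability space and $\{n(t)\}_{t\in\mathbb Z}$ a sequence of i.i.d. $X$-valued (Bochner measurable) random variables with $\mathbb E\|n(t)\|^2<\infty$ and $\mathbb E[n(t)]=0$. Let $F_0,F_1\in\mathcal B(X,Y)$ and $g(t)=F_0n(t)+F_1n(t-1)$ for $t\in\mathbb Z$. The $X$-valued random sequence $\{x(t)\}_{t\ge-1}$ satisfies $x(-1)=c$ and $A_0x(t)+A_1x(t-1)=g(t)$ for every integer $t\ge0$. Let $g_+(t)=g(t)$ for $t\ge0$ and $g_+(t)=0$ for $t<0$. For integers $t\ge0$, $k\ge1$, $\ell\ge0$ write $\nabla^{-k}g_+(t)=\sum_{s=0}^t\binom{s+k-1}{s}g(t-s)$, $\nabla^\ell g_+(t)=\sum_{s=0}^{\min\{\ell,t\}}\binom{\ell}{s}(-1)^sg(t-s)$ and $\nabla^\ell g(t)=\sum_{s=0}^{\ell}\binom{\ell}{s}(-1)^sg(t-s)$. *)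

theory Defs
  imports "HOL-Analysis.Analysis" "HOL-Probability.Probability"
begin

class complex_banach = banach +
  fixes cscale :: "complex \<Rightarrow> 'a \<Rightarrow> 'a"
  assumes cscale_add_right: "cscale a (x + y) = cscale a x + cscale a y"
    and cscale_add_left: "cscale (a + b) x = cscale a x + cscale b x"
    and cscale_cscale: "cscale a (cscale b x) = cscale (a * b) x"
    and cscale_one: "cscale 1 x = x"
    and cscale_of_real: "cscale (complex_of_real r) x = r *\<^sub>R x"
    and norm_cscale: "norm (cscale a x) = cmod a * norm x"

instantiation complex :: complex_banach
begin
definition cscale_complex :: "complex \<Rightarrow> complex \<Rightarrow> complex" where
  "cscale_complex a x = a * x"
instance
  by standard (auto simp: cscale_complex_def algebra_simps norm_mult scaleR_conv_of_real)
end

text \<open>Bounded complex-linear operators are represented as bounded (real-)linear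
operators (type blinfun) which are in addition complex-homogeneous.\<close>

definition clinear_op :: "('a::complex_banach \<Rightarrow>\<^sub>L 'b::complex_banach) \<Rightarrow> bool" where
  "clinear_op T \<longleftrightarrow> (\<forall>c u. T (cscale c u) = cscale c (T u))"

definition cscaleL :: "complex \<Rightarrow> ('a::complex_banach \<Rightarrow>\<^sub>L 'b::complex_banach) \<Rightarrow> ('a \<Rightarrow>\<^sub>L 'b)" where
  "cscaleL c T = Blinfun (\<lambda>u. cscale c (T u))"

definition pencil :: "('a::complex_banach \<Rightarrow>\<^sub>L 'b::complex_banach) \<Rightarrow> ('a \<Rightarrow>\<^sub>L 'b) \<Rightarrow> complex \<Rightarrow> ('a \<Rightarrow>\<^sub>L 'b)" where
  "pencil A0 A1 z = A0 + cscaleL z A1"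

definition op_holomorphic_on :: "(complex \<Rightarrow> ('a::complex_banach \<Rightarrow>\<^sub>L 'b::complex_banach)) \<Rightarrow> complex set \<Rightarrow> bool" where
  "op_holomorphic_on F S \<longleftrightarrow> open S \<and>
     (\<forall>z\<in>S. \<exists>D. ((\<lambda>w. cscaleL (inverse (w - z)) (F w - F z)) \<longlongrightarrow> D) (at z))"

definition op_invertible :: "('a::complex_banach \<Rightarrow>\<^sub>L 'a) \<Rightarrow> bool" where
  "op_invertible U \<longleftrightarrow> (\<exists>W. W o\<^sub>L U = id_blinfun \<and> U o\<^sub>L W = id_blinfun)"

definition op_inv :: "('a::complex_banach \<Rightarrow>\<^sub>L 'a) \<Rightarrow> ('a \<Rightarrow>\<^sub>L 'a)" where
  "op_inv U = (THE W. W o\<^sub>L U = id_blinfun \<and> U o\<^sub>L W = id_blinfun)"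

definition op_pow :: "('a::complex_banach \<Rightarrow>\<^sub>L 'a) \<Rightarrow> nat \<Rightarrow> ('a \<Rightarrow>\<^sub>L 'a)" where
  "op_pow U k = ((\<lambda>W. U o\<^sub>L W) ^^ k) id_blinfun"

definition Vcoef :: "('y::complex_banach \<Rightarrow>\<^sub>L 'x::complex_banach) \<Rightarrow> ('x \<Rightarrow>\<^sub>L 'y) \<Rightarrow> nat \<Rightarrow> ('y \<Rightarrow>\<^sub>L 'x)" where
  "Vcoef T0 C1 s = cscaleL ((-1) ^ s)
      (op_pow (op_inv (id_blinfun - (T0 o\<^sub>L C1))) (Suc s) o\<^sub>L op_pow (T0 o\<^sub>L C1) s o\<^sub>L T0)"

definition bochner_measurable :: "'w measure \<Rightarrow> ('w \<Rightarrow> 'b::real_normed_vector) \<Rightarrow> bool" where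
  "bochner_measurable M f \<longleftrightarrow>
     (\<exists>s. (\<forall>i. simple_function M (s i)) \<and> (AE \<omega> in M. (\<lambda>i. s i \<omega>) \<longlonglongrightarrow> f \<omega>))"

text \<open>Bochner integral (no separability assumption on the target space).\<close>
definition has_bochner_integral_gen :: "'w measure \<Rightarrow> ('w \<Rightarrow> 'b::real_normed_vector) \<Rightarrow> 'b \<Rightarrow> bool" where
  "has_bochner_integral_gen M f v \<longleftrightarrow> bochner_measurable M f \<and>
     (\<exists>s. (\<forall>i. Bochner_Integration.simple_bochner_integrable M (s i)) \<and>
          (\<lambda>i. \<integral>\<^sup>+\<omega>. norm (f \<omega> - s i \<omega>) \<partial>M) \<longlonglongrightarrow> 0 \<and>
          (\<lambda>i. Bochner_Integration.simple_bochner_integral M (s i)) \<longlonglongrightarrow> v)"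

end

theory Submission imports Defs begin

lemma ps_unique:
  fixes a :: "nat \<Rightarrow> 'a::banach"
  assumes r: "r > 0" and S: "\<And>h. 0 < h \<Longrightarrow> h < r \<Longrightarrow> (\<lambda>k. h ^ k *\<^sub>R a k) sums 0"
  shows "a k = 0"
proof (induction k rule: less_induct)
  case (less k)
  define h0 where "h0 = r/2"
  have h0: "0 < h0" "h0 < r" using r by (auto simp: h0_def)
  have "summable (\<lambda>k. h0 ^ k *\<^sub>R a k)" using S[OF h0] by (auto simp: sums_iff)
  hence "Bseq (\<lambda>k. h0 ^ k *\<^sub>R a k)" using summable_LIMSEQ_zero convergent_imp_Bseq convergentI by blast
  then obtain B where B: "B > 0" "\<And>j. norm (h0 ^ j *\<^sub>R a j) \<le> B" by (auto elim: BseqE)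
  have bnd: "norm (a j) \<le> B / h0 ^ j" for j
    using B(2)[of j] h0 by (simp add: field_simps)
  have key: "norm (a k) \<le> 2 * B * h / h0 ^ Suc k" if h: "0 < h" "h \<le> h0/2" for h
  proof -
    have hr: "h < r" using h h0 by auto
    define f where "f = (\<lambda>j. h ^ (j + k) *\<^sub>R a (j + k))"
    have s0: "f sums 0"
      unfolding f_def using S[OF h(1) hr] less.IH by (subst sums_iff_shift) simp
    have s1: "(\<lambda>j. f (Suc j)) sums (- f 0)"
      by (subst sums_Suc_iff) (simp add: s0)
    define q where "q = h / h0"
    have q: "0 < q" "q \<le> 1/2" using h h0 by (auto simp: q_def field_simps)
    have g: "(\<lambda>j. B * q ^ Suc k * q ^ j) sums (B * q ^ Suc k * (1 / (1 - q)))"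
      by (rule sums_mult, rule geometric_sums) (use q in auto)
    have le: "norm (f (Suc j)) \<le> B * q ^ Suc k * q ^ j" for j
    proof -
      have "norm (f (Suc j)) = h ^ (Suc j + k) * norm (a (Suc j + k))"
        using h by (simp add: f_def)
      also have "\<dots> \<le> h ^ (Suc j + k) * (B / h0 ^ (Suc j + k))"
        by (rule mult_left_mono[OF bnd]) (use h in auto)
      also have "\<dots> = B * q ^ (Suc j + k)" by (simp add: q_def power_divide mult_ac)
      also have "\<dots> = B * q ^ Suc k * q ^ j" by (simp add: power_add)
      finally show ?thesis .
    qed
    have "norm (- f 0) \<le> B * q ^ Suc k * (1 / (1 - q))"
      by (rule norm_sums_le[OF s1 g le])
    also have "\<dots> \<le> B * q ^ Suc k * 2"
      using q B by (intro mult_left_mono) (auto simp: field_simps)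
    finally have "h ^ k * norm (a k) \<le> 2 * B * q ^ Suc k" using h by (simp add: f_def)
    hence "h ^ k * norm (a k) \<le> h ^ k * (2 * B * h / h0 ^ Suc k)"
      by (simp add: q_def power_divide mult_ac)
    thus ?thesis by (rule mult_left_le_imp_le) (use h in auto)
  qed
  show ?case
  proof (rule ccontr)
    assume ne: "a k \<noteq> 0"
    define c where "c = norm (a k)"
    have c: "c > 0" using ne by (simp add: c_def)
    define h where "h = min (h0/2) (c * h0 ^ Suc k / (4 * B))"
    have hpos: "h > 0" using c h0 B by (simp add: h_def)
    have "c \<le> 2 * B * h / h0 ^ Suc k" using key[OF hpos] by (simp add: h_def c_def)
    also have "\<dots> \<le> 2 * B * (c * h0 ^ Suc k / (4 * B)) / h0 ^ Suc k"
      using B h0 by (intro divide_right_mono mult_left_mono) (auto simp: h_def)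
    also have "\<dots> = c / 2" using B h0 by (simp add: field_simps)
    finally show False using c by simp
  qed
qed


lemma core:
  fixes T :: "int \<Rightarrow> 'b::real_normed_vector" and La Lb :: "'b \<Rightarrow> 'v::banach"
  assumes La: "bounded_linear La" and Lb: "bounded_linear Lb" and r: "r > 0"
    and T3: "T (-3) = 0"
    and H: "\<And>h. 0 < h \<Longrightarrow> h < r \<Longrightarrow> \<exists>P. (\<lambda>k. h ^ k *\<^sub>R T (int k)) sums P \<and>
        La (P + inverse h *\<^sub>R T (-1) + inverse (h^2) *\<^sub>R T (-2))
        + h *\<^sub>R Lb (P + inverse h *\<^sub>R T (-1) + inverse (h^2) *\<^sub>R T (-2)) = w"
  shows "La (T (int k - 2)) + Lb (T (int k - 3)) = (if k = 2 then w else 0)"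
proof -
  define b where "b = (\<lambda>k::nat. La (T (int k - 2)) + Lb (T (int k - 3)) - (if k = 2 then w else 0))"
  have "b k = 0"
  proof (rule ps_unique[of r])
    show "r > 0" by fact
    fix h :: real assume h: "0 < h" "h < r"
    obtain P where P: "(\<lambda>k. h ^ k *\<^sub>R T (int k)) sums P" and E:
      "La (P + inverse h *\<^sub>R T (-1) + inverse (h^2) *\<^sub>R T (-2))
        + h *\<^sub>R Lb (P + inverse h *\<^sub>R T (-1) + inverse (h^2) *\<^sub>R T (-2)) = w"
      using H[OF h] by blast
    have s0: "(\<lambda>k. h ^ k *\<^sub>R La (T (int k))) sums La P"
      using bounded_linear.sums[OF La P] by (simp add: linear_simps La)
    have s1: "(\<lambda>k. h ^ k *\<^sub>R Lb (T (int k))) sums Lb P"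
      using bounded_linear.sums[OF Lb P] by (simp add: linear_simps Lb)
    define g0 where "g0 = (\<lambda>k::nat. h ^ k *\<^sub>R La (T (int k - 2)))"
    define g1 where "g1 = (\<lambda>k::nat. h ^ k *\<^sub>R Lb (T (int k - 3)))"
    have "(\<lambda>k. g0 (Suc (Suc k))) sums (h^2 *\<^sub>R La P)"
      using sums_scaleR_right[OF s0, of "h^2"] by (simp add: g0_def scaleR_scaleR power_add mult_ac power2_eq_square)
    hence "(\<lambda>k. g0 (Suc k)) sums (h^2 *\<^sub>R La P + g0 1)" by (subst (asm) sums_Suc_iff) (simp add: numeral_2_eq_2)
    hence sg0: "g0 sums (h^2 *\<^sub>R La P + g0 1 + g0 0)" by (subst (asm) sums_Suc_iff) (simp add: numeral_2_eq_2)
    have "(\<lambda>k. g1 (Suc (Suc (Suc k)))) sums (h^3 *\<^sub>R Lb P)"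
      using sums_scaleR_right[OF s1, of "h^3"] by (simp add: g1_def scaleR_scaleR power_add mult_ac power3_eq_cube)
    hence "(\<lambda>k. g1 (Suc (Suc k))) sums (h^3 *\<^sub>R Lb P + g1 2)" by (subst (asm) sums_Suc_iff) (simp add: numeral_2_eq_2)
    hence "(\<lambda>k. g1 (Suc k)) sums (h^3 *\<^sub>R Lb P + g1 2 + g1 1)" by (subst (asm) sums_Suc_iff) (simp add: numeral_2_eq_2)
    hence sg1: "g1 sums (h^3 *\<^sub>R Lb P + g1 2 + g1 1 + g1 0)" by (subst (asm) sums_Suc_iff) (simp add: numeral_2_eq_2)
    have sd: "(\<lambda>k. if k = 2 then h ^ k *\<^sub>R w else 0) sums (h^2 *\<^sub>R w)"
      using sums_single[of 2 "\<lambda>k. h ^ k *\<^sub>R w"] by simp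
    have "(\<lambda>k. g0 k + g1 k - (if k = 2 then h ^ k *\<^sub>R w else 0)) sums
       ((h^2 *\<^sub>R La P + g0 1 + g0 0) + (h^3 *\<^sub>R Lb P + g1 2 + g1 1 + g1 0) - h^2 *\<^sub>R w)"
      by (intro sums_add sums_diff sg0 sg1 sd)
    moreover have "(\<lambda>k. g0 k + g1 k - (if k = 2 then h ^ k *\<^sub>R w else 0)) = (\<lambda>k. h ^ k *\<^sub>R b k)"
      by (auto simp: g0_def g1_def b_def scaleR_add_right scaleR_diff_right)
    moreover have "(h^2 *\<^sub>R La P + g0 1 + g0 0) + (h^3 *\<^sub>R Lb P + g1 2 + g1 1 + g1 0) - h^2 *\<^sub>R w = 0"
    proof -
      have "h^2 *\<^sub>R (La (P + inverse h *\<^sub>R T (-1) + inverse (h^2) *\<^sub>R T (-2))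
        + h *\<^sub>R Lb (P + inverse h *\<^sub>R T (-1) + inverse (h^2) *\<^sub>R T (-2))) = h^2 *\<^sub>R w"
        using E by simp
      thus ?thesis using h T3
        by (simp add: g0_def g1_def linear_simps La Lb scaleR_add_right scaleR_scaleR
             power2_eq_square power3_eq_cube field_simps algebra_simps)
    qed
    ultimately show "(\<lambda>k. h ^ k *\<^sub>R b k) sums 0" by simp
  qed
  thus ?thesis by (simp add: b_def)
qed


lemma cscale_zero_left[simp]: "cscale 0 (x::'a::complex_banach) = 0"
  using norm_cscale[of 0 x] by simp

lemma cscale_zero_right[simp]: "cscale c (0::'a::complex_banach) = 0"
  using norm_cscale[of c 0] by simp

lemma bounded_linear_cscale: "bounded_linear (cscale c :: 'a::complex_banach \<Rightarrow> 'a)"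
proof (rule bounded_linear_intro[where K="cmod c"])
  fix x y :: 'a show "cscale c (x + y) = cscale c x + cscale c y" by (rule cscale_add_right)
next
  fix r :: real and x :: 'a
  show "cscale c (r *\<^sub>R x) = r *\<^sub>R cscale c x"
    by (metis cscale_of_real cscale_cscale mult.commute)
next
  fix x :: 'a
  show "norm (cscale c x) \<le> norm x * cmod c" by (simp add: norm_cscale mult.commute)
qed

lemma cscaleL_apply: "blinfun_apply (cscaleL c T) u = cscale c (T u)"
  unfolding cscaleL_def
  by (subst bounded_linear_Blinfun_apply)
     (auto intro: bounded_linear_compose[OF bounded_linear_cscale blinfun.bounded_linear_right])

lemma cscaleL_real: "cscaleL (complex_of_real r) T = r *\<^sub>R T"
  by (rule blinfun_eqI) (simp add: cscaleL_apply cscale_of_real blinfun.scaleR_left)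

lemma pencil_apply: "blinfun_apply (pencil A0 A1 z) u = A0 u + cscale z (A1 u)"
  by (simp add: pencil_def cscaleL_apply blinfun.add_left)

lemma laurent_real:
  fixes T :: "int \<Rightarrow> ('y::complex_banach \<Rightarrow>\<^sub>L 'x::complex_banach)"
  assumes Laurent: "\<forall>z. 0 < cmod (z - 1) \<and> cmod (z - 1) < \<epsilon> \<longrightarrow>
        (\<exists>P Q. (\<lambda>k. cscaleL ((z - 1) ^ k) (T (int k))) sums P \<and>
               (\<lambda>k. cscaleL ((z - 1) powi (- int (Suc k))) (T (- int (Suc k)))) sums Q \<and>
               R z = P + Q)"
    and pole: "\<forall>k::int. k \<ge> 3 \<longrightarrow> T (- k) = 0"
    and h: "0 < h" "h < \<epsilon>"
  shows "\<exists>P. (\<lambda>k. h ^ k *\<^sub>R T (int k)) sums P \<and>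
     R (1 + complex_of_real h) = P + inverse h *\<^sub>R T (-1) + inverse (h^2) *\<^sub>R T (-2)"
proof -
  define z where "z = 1 + complex_of_real h"
  have z1: "z - 1 = complex_of_real h" by (simp add: z_def)
  obtain P Q where P: "(\<lambda>k. cscaleL ((z - 1) ^ k) (T (int k))) sums P"
     and Q: "(\<lambda>k. cscaleL ((z - 1) powi (- int (Suc k))) (T (- int (Suc k)))) sums Q"
     and RPQ: "R z = P + Q"
    using Laurent[rule_format, of z] h by (auto simp: z1)
  have P': "(\<lambda>k. h ^ k *\<^sub>R T (int k)) sums P"
    using P by (simp add: z1 flip: of_real_power cscaleL_real)
  define f where "f = (\<lambda>k. cscaleL ((z - 1) powi (- int (Suc k))) (T (- int (Suc k))))"
  have f0: "\<And>k. k \<notin> {0,1} \<Longrightarrow> f k = 0"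
  proof -
    fix k :: nat assume "k \<notin> {0,1}"
    hence "int (Suc k) \<ge> 3" by auto
    hence "T (- int (Suc k)) = 0" using pole by blast
    thus "f k = 0" by (intro blinfun_eqI) (simp add: f_def cscaleL_apply)
  qed
  have "f sums (\<Sum>n\<in>{0,1}. f n)" by (rule sums_finite) (auto simp: f0)
  hence "Q = f 0 + f 1" using Q by (simp add: f_def sums_unique2)
  also have "f 0 = inverse h *\<^sub>R T (-1)"
    by (simp add: f_def z1 power_int_minus flip: cscaleL_real)
  also have "f 1 = inverse (h^2) *\<^sub>R T (-2)"
    by (simp add: f_def z1 power_int_minus flip: cscaleL_real)
  finally show ?thesis using P' RPQ by (auto simp: z_def add.assoc)
qed


lemma cscaleL_m1: "cscaleL ((-1) ^ s) X = (-1) ^ s *\<^sub>R X"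
  using cscaleL_real[of "(-1)^s" X] by simp

lemma op_pow_0[simp]: "op_pow U 0 = id_blinfun"
  by (simp add: op_pow_def)

lemma op_pow_Suc_apply: "blinfun_apply (op_pow U (Suc k)) x = U (op_pow U k x)"
  by (simp add: op_pow_def)

lemma op_inv_eq:
  assumes "W o\<^sub>L U = id_blinfun" "U o\<^sub>L W = id_blinfun"
  shows "op_inv U = W"
  unfolding op_inv_def
proof (rule the_equality)
  show "W o\<^sub>L U = id_blinfun \<and> U o\<^sub>L W = id_blinfun" using assms by simp
next
  fix W' assume "W' o\<^sub>L U = id_blinfun \<and> U o\<^sub>L W' = id_blinfun"
  hence a: "\<And>x. W' (U x) = x" "\<And>x. U (W' x) = x"
    by (simp_all flip: blinfun_apply_blinfun_compose)
  have b: "\<And>x. W (U x) = x" "\<And>x. U (W x) = x" using assms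
    by (simp_all flip: blinfun_apply_blinfun_compose)
  show "W' = W"
  proof (rule blinfun_eqI)
    fix x have "W' x = W' (U (W x))" by (simp add: b)
    also have "\<dots> = W x" by (simp add: a)
    finally show "W' x = W x" .
  qed
qed

lemma alg:
  fixes T :: "int \<Rightarrow> ('y::complex_banach \<Rightarrow>\<^sub>L 'x::complex_banach)"
    and C0 C1 A0 A1 :: "'x \<Rightarrow>\<^sub>L 'y" and R0 :: "'y \<Rightarrow>\<^sub>L 'x"
  assumes LI: "\<And>j u. T j (C0 u) + T (j - 1) (C1 u) = (if j = 0 then u else 0)"
    and RI: "\<And>j y. C0 (T j y) + C1 (T (j - 1) y) = (if j = 0 then y else 0)"
    and Tneg: "\<forall>j\<le>-3. T j = 0"
    and A0: "\<And>u. A0 u = C0 u - C1 u" and A1: "\<And>u. A1 u = C1 u"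
    and R0A0: "\<And>u. R0 (A0 u) = u" and A0R0: "\<And>y. A0 (R0 y) = y"
  shows "op_invertible (id_blinfun - (T 0 o\<^sub>L C1))"
    and "\<And>s v. A0 (Vcoef (T 0) C1 (Suc s) v) + A1 (Vcoef (T 0) C1 s v) = 0"
    and "\<And>v. A0 (T (-2) v - T (-1) v + Vcoef (T 0) C1 0 v) = v"
    and "\<And>s v. A0 ((real (Suc s) + 1) *\<^sub>R T (-2) v - T (-1) v) + A1 ((real s + 1) *\<^sub>R T (-2) v - T (-1) v) = 0"
    and "\<And>y. T (-2) y = T (-1) (- C0 (T (-1) y))"
    and "\<And>u. T (-2) (C0 u) = 0" and "\<And>y. C0 (T (-2) y) = 0"
proof -
  have frec: "T (a - 1) (C1 (T b y)) - T a (C1 (T (b - 1) y))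
      = (if a = 0 then T b y else 0) - (if b = 0 then T a y else 0)" for a b y
  proof -
    have e1: "T a (C0 (T b y)) + T (a - 1) (C1 (T b y)) = (if a = 0 then T b y else 0)"
      by (rule LI)
    have "T a (C0 (T b y) + C1 (T (b - 1) y)) = T a (if b = 0 then y else 0)"
      by (simp only: RI)
    hence e2: "T a (C0 (T b y)) + T a (C1 (T (b - 1) y)) = (if b = 0 then T a y else 0)"
      by (simp add: blinfun.add_right)
    have "T (a - 1) (C1 (T b y)) - T a (C1 (T (b - 1) y)) =
      (T a (C0 (T b y)) + T (a - 1) (C1 (T b y))) - (T a (C0 (T b y)) + T a (C1 (T (b - 1) y)))"
      by simp
    also have "\<dots> = (if a = 0 then T b y else 0) - (if b = 0 then T a y else 0)"
      by (simp only: e1 e2)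
    finally show ?thesis .
  qed
  have Tm3: "T (-3) = 0" using Tneg by simp
  have LIm2: "T (-2) (C0 u) = 0" for u using LI[of "-2" u] Tm3 by simp
  have RIm2: "C0 (T (-2) y) = 0" for y using RI[of "-2" y] Tm3 by simp
  have LIm1: "T (-1) (C0 u) = - T (-2) (C1 u)" for u
    using LI[of "-1" u] by (simp add: eq_neg_iff_add_eq_0)
  have RIm1: "C0 (T (-1) y) = - C1 (T (-2) y)" for y
    using RI[of "-1" y] by (simp add: eq_neg_iff_add_eq_0)
  have LI0: "T 0 (C0 u) = u - T (-1) (C1 u)" for u
    using LI[of 0 u] by (simp add: eq_diff_eq)
  have RI0: "C0 (T 0 y) = y - C1 (T (-1) y)" for y
    using RI[of 0 y] by (simp add: eq_diff_eq)
  have g1: "T 1 (C1 (T (-2) y)) = 0" for y using frec[of 2 "-2" y] Tm3 by simp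
  have F1: "T 0 (C1 (T (-1) y)) = 0" for y using frec[of 1 "-1" y] g1[of y] by simp
  have F2: "T (-1) (C1 (T 0 y)) = 0" for y using frec[of 0 0 y] F1[of y] by simp
  have F3: "T (-2) (C1 (T 0 y)) = 0" for y using frec[of "-2" 1 y] Tm3 by simp
  have F6: "T (-1) (C1 (T (-1) y)) = T (-1) y" for y using frec[of "-1" 0 y] F3[of y] by simp
  have F4: "T (-1) (C0 (T 0 y)) = 0" for y using LIm1[of "T 0 y"] F3[of y] by simp
  have F5: "T 0 (C0 (T (-1) y)) = 0" for y using LI0[of "T (-1) y"] F6[of y] by simp
  have E: "C1 (T (-1) (A0 u)) = A0 (T (-1) (C1 u))" for u
    by (simp add: A0 blinfun.diff_right LIm1 RIm1 blinfun.minus_right)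
  show "\<And>y. T (-2) y = T (-1) (- C0 (T (-1) y))"
  proof -
    fix y
    have "T (-2) y = T (-2) (C0 (T 0 y) + C1 (T (-1) y))" using RI[of 0 y] by simp
    also have "\<dots> = T (-2) (C1 (T (-1) y))" by (simp add: blinfun.add_right LIm2)
    also have "\<dots> = - T (-1) (C0 (T (-1) y))" using LIm1[of "T (-1) y"] by simp
    finally show "T (-2) y = T (-1) (- C0 (T (-1) y))" by (simp add: blinfun.minus_right)
  qed
  show "\<And>u. T (-2) (C0 u) = 0" "\<And>y. C0 (T (-2) y) = 0" by (rule LIm2, rule RIm2)
  show "\<And>s v. A0 ((real (Suc s) + 1) *\<^sub>R T (-2) v - T (-1) v) + A1 ((real s + 1) *\<^sub>R T (-2) v - T (-1) v) = 0"
    by (simp add: A0 A1 blinfun.diff_right blinfun.scaleR_right RIm2 RIm1) (simp add: algebra_simps scaleR_2)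
  define P where "P = T (-1) o\<^sub>L C1"
  define M where "M = T 0 o\<^sub>L C1"
  define N where "N = P + ((id_blinfun - P) o\<^sub>L R0 o\<^sub>L C0 o\<^sub>L (id_blinfun - P))"
  have Pa: "P x = T (-1) (C1 x)" for x by (simp add: P_def)
  have Ma: "M x = T 0 (C1 x)" for x by (simp add: M_def)
  have Na: "N x = P x + (R0 (C0 (x - P x)) - P (R0 (C0 (x - P x))))" for x
    unfolding N_def by (simp only: blinfun.add_left blinfun.diff_left blinfun_apply_blinfun_compose blinfun_apply_id_blinfun)
  have PP: "P (P x) = P x" for x by (simp add: Pa F6)
  have PN: "P (N x) = P x" for x
  proof -
    define y' where "y' = R0 (C0 (x - P x))"
    have "N x = P x + (y' - P y')" by (simp add: Na y'_def)
    thus ?thesis by (simp add: blinfun.add_right blinfun.diff_right PP)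
  qed
  have PT0: "P (T 0 y) = 0" for y by (simp add: Pa F2)
  have MP: "M (P z) = 0" for z by (simp add: Ma Pa F1)
  have A0NT0: "A0 (N (T 0 y)) = C0 (T 0 y)" for y
  proof -
    have "N (T 0 y) = R0 (C0 (T 0 y)) - P (R0 (C0 (T 0 y)))" by (simp add: Na PT0)
    hence "A0 (N (T 0 y)) = C0 (T 0 y) - A0 (T (-1) (C1 (R0 (C0 (T 0 y)))))"
      by (simp add: blinfun.diff_right A0R0 Pa)
    also have "A0 (T (-1) (C1 (R0 (C0 (T 0 y))))) = 0"
      by (simp only: E[symmetric] A0R0 F4 blinfun.zero_right)
    finally show ?thesis by simp
  qed
  have Rinv: "N x - M (N x) = x" for x
  proof -
    define p where "p = P x"
    define y' where "y' = R0 (C0 (x - p))"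
    have "N x = p + (y' - P y')" by (simp add: Na p_def y'_def)
    hence "N x - M (N x) = p + (y' - P y') - (M p + (M y' - M (P y')))"
      by (simp add: blinfun.add_right blinfun.diff_right)
    also have "\<dots> = p + (y' - P y') - M y'" by (simp add: MP p_def)
    also have "y' - P y' = T 0 (C0 y')" using LI0[of y'] by (simp add: Pa)
    also have "p + T 0 (C0 y') - M y' = p + T 0 (A0 y')"
      by (simp add: A0 Ma blinfun.diff_right)
    also have "A0 y' = C0 (x - p)" by (simp add: y'_def A0R0)
    also have "T 0 (C0 (x - p)) = (x - p) - T 0 (C0 p)"
      by (simp add: blinfun.diff_right LI0 p_def Pa)
    also have "T 0 (C0 p) = 0" by (simp add: p_def Pa F5)
    finally show ?thesis by simp
  qed
  have NP: "N (P x) = P x" for x by (simp add: Na PP)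
  have NT0A0: "N (T 0 (A0 x)) = x - P x" for x
  proof -
    have "C0 (T 0 (A0 x)) = A0 (x - P x)"
      by (simp add: RI0 blinfun.diff_right Pa E)
    thus ?thesis by (simp add: Na PT0 A0R0 R0A0 blinfun.diff_right PP)
  qed
  have Linv: "N (x - M x) = x" for x
  proof -
    have "x - M x = P x + T 0 (A0 x)"
      by (simp add: A0 blinfun.diff_right LI0 Ma Pa)
    hence "N (x - M x) = N (P x) + N (T 0 (A0 x))" by (simp add: blinfun.add_right)
    thus ?thesis by (simp add: NP NT0A0)
  qed
  have comm: "N (M x) = M (N x)" for x
  proof -
    have l: "N x - N (M x) = x" using Linv[of x] by (simp add: blinfun.diff_right)
    have r: "N x - M (N x) = x" by (rule Rinv)
    have "N (M x) = N x - (N x - N (M x))" by simp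
    also have "\<dots> = N x - (N x - M (N x))" by (simp only: l r)
    also have "\<dots> = M (N x)" by simp
    finally show ?thesis .
  qed
  have inv1: "N o\<^sub>L (id_blinfun - M) = id_blinfun"
    by (rule blinfun_eqI) (simp add: blinfun.diff_left Linv)
  have inv2: "(id_blinfun - M) o\<^sub>L N = id_blinfun"
    by (rule blinfun_eqI) (simp add: blinfun.diff_left Rinv)
  show "op_invertible (id_blinfun - (T 0 o\<^sub>L C1))"
    unfolding op_invertible_def M_def[symmetric] using inv1 inv2 by blast
  have opinv: "op_inv (id_blinfun - (T 0 o\<^sub>L C1)) = N"
    unfolding M_def[symmetric] by (rule op_inv_eq[OF inv1 inv2])
  have Va: "Vcoef (T 0) C1 s v = (-1) ^ s *\<^sub>R op_pow N (Suc s) (op_pow M s (T 0 v))" for s v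
    by (simp add: Vcoef_def opinv cscaleL_m1 blinfun.scaleR_left M_def)
  have powcomm: "op_pow N k (M x) = M (op_pow N k x)" for k x
    by (induction k) (simp_all add: op_pow_Suc_apply comm)
  have powT0: "\<exists>y. op_pow M k (T 0 v) = T 0 y" for k v
  proof (induction k)
    case 0 show ?case by auto
  next
    case (Suc k)
    then obtain y where "op_pow M k (T 0 v) = T 0 y" by blast
    thus ?case by (auto simp add: op_pow_Suc_apply Ma)
  qed
  have powP: "P (op_pow N k x) = P x" for k x
    by (induction k) (simp_all add: op_pow_Suc_apply PN)
  have PV: "P (Vcoef (T 0) C1 s v) = 0" for s v
  proof -
    obtain y where y: "op_pow M s (T 0 v) = T 0 y" using powT0 by blast
    show ?thesis by (simp add: Va blinfun.scaleR_right powP y PT0)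
  qed
  have Vrec: "Vcoef (T 0) C1 (Suc s) v = - N (M (Vcoef (T 0) C1 s v))" for s v
  proof -
    have "Vcoef (T 0) C1 (Suc s) v = (-1) ^ Suc s *\<^sub>R N (op_pow N (Suc s) (M (op_pow M s (T 0 v))))"
      by (simp only: Va op_pow_Suc_apply)
    also have "\<dots> = (-1) ^ Suc s *\<^sub>R N (M (op_pow N (Suc s) (op_pow M s (T 0 v))))"
      by (simp only: powcomm)
    also have "\<dots> = - N (M (Vcoef (T 0) C1 s v))"
      by (simp add: Va blinfun.scaleR_right)
    finally show ?thesis .
  qed
  show "\<And>s v. A0 (Vcoef (T 0) C1 (Suc s) v) + A1 (Vcoef (T 0) C1 s v) = 0"
  proof -
    fix s v
    define w where "w = Vcoef (T 0) C1 s v"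
    have "A0 (Vcoef (T 0) C1 (Suc s) v) = - A0 (N (T 0 (C1 w)))"
      by (simp add: Vrec w_def Ma blinfun.minus_right)
    also have "\<dots> = - (C1 w - C1 (P w))" by (simp add: A0NT0 RI0 Pa)
    also have "P w = 0" by (simp add: w_def PV)
    finally show "A0 (Vcoef (T 0) C1 (Suc s) v) + A1 (Vcoef (T 0) C1 s v) = 0"
      by (simp add: A1 w_def)
  qed
  show "\<And>v. A0 (T (-2) v - T (-1) v + Vcoef (T 0) C1 0 v) = v"
  proof -
    fix v
    have V0: "Vcoef (T 0) C1 0 v = N (T 0 v)" by (simp add: Va op_pow_Suc_apply)
    show "A0 (T (-2) v - T (-1) v + Vcoef (T 0) C1 0 v) = v"
      by (simp add: V0 blinfun.add_right blinfun.diff_right A0NT0 RI0)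
         (simp add: A0 RIm2 RIm1)
  qed
qed

theorem mainTheorem7:
  fixes A0 A1 F0 F1 :: "'x::complex_banach \<Rightarrow>\<^sub>L 'y::complex_banach"
    and R :: "complex \<Rightarrow> ('y \<Rightarrow>\<^sub>L 'x)"
    and T :: "int \<Rightarrow> ('y \<Rightarrow>\<^sub>L 'x)"
    and \<epsilon> \<theta> :: real
    and M :: "'w measure"
    and n :: "int \<Rightarrow> 'w \<Rightarrow> 'x"
    and x :: "int \<Rightarrow> 'w \<Rightarrow> 'x"
    and c :: 'x and d :: 'y
  defines "C0 \<equiv> A0 + A1" and "C1 \<equiv> A1"
    and "S \<equiv> {z. cmod z < 1 + \<epsilon> \<and> z \<noteq> 1} \<union> {z. 0 < cmod (z - 1) \<and> cmod (z - 1) < 1 + \<theta>}"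
    and "g \<equiv> (\<lambda>t \<omega>. F0 (n t \<omega>) + F1 (n (t - 1) \<omega>))"
  assumes lin: "clinear_op A0" "clinear_op A1" "clinear_op F0" "clinear_op F1"
    and eps: "\<epsilon> > 0" and theta: "\<theta> > 0"
    and Rinv: "\<forall>z\<in>S. R z o\<^sub>L pencil A0 A1 z = id_blinfun \<and> pencil A0 A1 z o\<^sub>L R z = id_blinfun"
    and Rhol: "op_holomorphic_on R S"
    and Tlin: "\<forall>j. clinear_op (T j)"
    and Laurent: "\<forall>z. 0 < cmod (z - 1) \<and> cmod (z - 1) < \<epsilon> \<longrightarrow>
        (\<exists>P Q. (\<lambda>k. cscaleL ((z - 1) ^ k) (T (int k))) sums P \<and>
               (\<lambda>k. cscaleL ((z - 1) powi (- int (Suc k))) (T (- int (Suc k)))) sums Q \<and>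
               R z = P + Q)"
    and pole2: "T (-2) \<noteq> 0" "\<forall>k::int. k \<ge> 3 \<longrightarrow> T (- k) = 0"
    and prob: "prob_space M"
    and n_meas: "\<forall>t. bochner_measurable M (n t)"
    and n_rv: "\<forall>t. n t \<in> borel_measurable M"
    and n_indep: "prob_space.indep_vars M (\<lambda>_. borel) n UNIV"
    and n_ident: "\<forall>t. distr M borel (n t) = distr M borel (n 0)"
    and n_sq: "\<forall>t. integrable M (\<lambda>\<omega>. (norm (n t \<omega>))\<^sup>2)"
    and n_mean: "\<forall>t. has_bochner_integral_gen M (n t) 0"
    and x_rv: "\<forall>t\<ge>-1. x t \<in> borel_measurable M"
    and x_init: "\<forall>\<omega>\<in>space M. x (-1) \<omega> = c"
    and x_rec: "\<forall>t\<ge>0. \<forall>\<omega>\<in>space M. A0 (x t \<omega>) + A1 (x (t - 1) \<omega>) = g t \<omega>"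
    and c_def: "c = T (-2) d"
  shows "op_invertible (id_blinfun - (T 0 o\<^sub>L C1))
    \<and> (\<forall>t::nat. \<forall>\<omega>\<in>space M.
         x (int t) \<omega> =
           T (-2) (\<Sum>s=0..t. real (s + 1) *\<^sub>R g (int t - int s) \<omega>)
           - T (-1) (\<Sum>s=0..t. g (int t - int s) \<omega>)
           + T (-2) d
           + real (t + 1) *\<^sub>R (T (-2) o\<^sub>L C0 o\<^sub>L T (-2)) d
           + (\<Sum>s=0..t. Vcoef (T 0) C1 s (g (int t - int s) \<omega>)))
    \<and> range (blinfun_apply (T (-2))) \<subseteq> range (blinfun_apply (T (-1)))
    \<and> (\<forall>f :: 'x \<Rightarrow>\<^sub>L complex. clinear_op f \<and> (\<forall>u\<in>range (blinfun_apply (T (-2))). f u = 0) \<longrightarrow>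
         (\<forall>t::nat. \<forall>\<omega>\<in>space M.
            f (x (int t) \<omega>) =
              - f (T (-1) (\<Sum>s=0..t. g (int t - int s) \<omega>))
              + (\<Sum>s=0..t. f (Vcoef (T 0) C1 s (g (int t - int s) \<omega>)))))"
proof -
  have Tneg: "T j = 0" if "j \<le> -3" for j
  proof -
    have "- j \<ge> 3" using that by simp
    hence "T (- (- j)) = 0" using pole2(2) by blast
    thus ?thesis by simp
  qed
  have T3: "T (-3) = 0" by (rule Tneg) simp
  have C0a: "C0 u = A0 u + A1 u" for u by (simp add: C0_def blinfun.add_left)
  have C1a: "C1 u = A1 u" for u by (simp add: C1_def)
  have zS: "1 + complex_of_real h \<in> S" if "0 < h" "h < \<epsilon>" for h
  proof -
    have "1 + complex_of_real h = complex_of_real (1 + h)" by simp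
    hence "cmod (1 + complex_of_real h) = 1 + h" using that by (simp only: norm_of_real)
    thus ?thesis using that by (simp add: S_def)
  qed
  have pen: "blinfun_apply (pencil A0 A1 (1 + complex_of_real h)) u = C0 u + h *\<^sub>R C1 u" for h u
    by (simp add: pencil_apply cscale_add_left cscale_one cscale_of_real C0a C1a)
  have LIk: "T (int k - 2) (C0 u) + T (int k - 3) (C1 u) = (if k = 2 then u else 0)" for k u
  proof (rule core[where r=\<epsilon> and T=T and La="\<lambda>X. blinfun_apply X (C0 u)" and Lb="\<lambda>X. blinfun_apply X (C1 u)"])
    fix h :: real assume h: "0 < h" "h < \<epsilon>"
    obtain P where P: "(\<lambda>k. h ^ k *\<^sub>R T (int k)) sums P"
      and RP: "R (1 + complex_of_real h) = P + inverse h *\<^sub>R T (-1) + inverse (h^2) *\<^sub>R T (-2)"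
      using laurent_real[OF Laurent pole2(2) h] by blast
    have "R (1 + complex_of_real h) o\<^sub>L pencil A0 A1 (1 + complex_of_real h) = id_blinfun"
      using Rinv zS[OF h] by blast
    hence "R (1 + complex_of_real h) (pencil A0 A1 (1 + complex_of_real h) u) = u"
      by (metis blinfun_apply_blinfun_compose blinfun_apply_id_blinfun)
    hence "R (1 + complex_of_real h) (C0 u) + h *\<^sub>R R (1 + complex_of_real h) (C1 u) = u"
      by (simp add: pen blinfun.add_right blinfun.scaleR_right)
    thus "\<exists>P. (\<lambda>k. h ^ k *\<^sub>R T (int k)) sums P \<and>
        blinfun_apply (P + inverse h *\<^sub>R T (-1) + inverse (h^2) *\<^sub>R T (-2)) (C0 u)
        + h *\<^sub>R blinfun_apply (P + inverse h *\<^sub>R T (-1) + inverse (h^2) *\<^sub>R T (-2)) (C1 u) = u"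
      using P RP by auto
  qed (use eps T3 in auto)
  have RIk: "C0 (T (int k - 2) y) + C1 (T (int k - 3) y) = (if k = 2 then y else 0)" for k y
  proof (rule core[where r=\<epsilon> and T=T and La="\<lambda>X. C0 (blinfun_apply X y)" and Lb="\<lambda>X. C1 (blinfun_apply X y)"])
    fix h :: real assume h: "0 < h" "h < \<epsilon>"
    obtain P where P: "(\<lambda>k. h ^ k *\<^sub>R T (int k)) sums P"
      and RP: "R (1 + complex_of_real h) = P + inverse h *\<^sub>R T (-1) + inverse (h^2) *\<^sub>R T (-2)"
      using laurent_real[OF Laurent pole2(2) h] by blast
    have "pencil A0 A1 (1 + complex_of_real h) o\<^sub>L R (1 + complex_of_real h) = id_blinfun"
      using Rinv zS[OF h] by blast
    hence "pencil A0 A1 (1 + complex_of_real h) (R (1 + complex_of_real h) y) = y"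
      by (metis blinfun_apply_blinfun_compose blinfun_apply_id_blinfun)
    hence "C0 (R (1 + complex_of_real h) y) + h *\<^sub>R C1 (R (1 + complex_of_real h) y) = y"
      by (simp add: pen)
    thus "\<exists>P. (\<lambda>k. h ^ k *\<^sub>R T (int k)) sums P \<and>
        C0 (blinfun_apply (P + inverse h *\<^sub>R T (-1) + inverse (h^2) *\<^sub>R T (-2)) y)
        + h *\<^sub>R C1 (blinfun_apply (P + inverse h *\<^sub>R T (-1) + inverse (h^2) *\<^sub>R T (-2)) y) = y"
      using P RP by auto
  qed (use eps T3 in \<open>auto intro: bounded_linear_compose[OF blinfun.bounded_linear_right blinfun.bounded_linear_left]\<close>)
  have LI: "T j (C0 u) + T (j - 1) (C1 u) = (if j = 0 then u else 0)" for j u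
  proof (cases "j \<ge> -2")
    case True
    then obtain k where k: "j = int k - 2" by (rule_tac k="nat (j+2)" in that) simp
    have "j - 1 = int k - 3" using k by simp
    thus ?thesis using LIk[of k u] k by (cases "k = 2") auto
  next
    case False thus ?thesis using Tneg[of j] Tneg[of "j - 1"] by auto
  qed
  have RI: "C0 (T j y) + C1 (T (j - 1) y) = (if j = 0 then y else 0)" for j y
  proof (cases "j \<ge> -2")
    case True
    then obtain k where k: "j = int k - 2" by (rule_tac k="nat (j+2)" in that) simp
    have "j - 1 = int k - 3" using k by simp
    thus ?thesis using RIk[of k y] k by (cases "k = 2") auto
  next
    case False thus ?thesis using Tneg[of j] Tneg[of "j - 1"] by auto
  qed
  have A0a: "A0 u = C0 u - C1 u" for u by (simp add: C0a C1a)
  have A1a: "A1 u = C1 u" for u by (simp add: C1a)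
  have zero_S: "0 \<in> S" using eps by (simp add: S_def)
  have pen0: "pencil A0 A1 0 = A0" by (rule blinfun_eqI) (simp add: pencil_apply)
  define R0 where "R0 = R 0"
  have R0A0: "R0 (A0 u) = u" for u
  proof -
    have "R 0 o\<^sub>L pencil A0 A1 0 = id_blinfun" using Rinv zero_S by blast
    hence "R0 o\<^sub>L A0 = id_blinfun" by (simp only: pen0 R0_def)
    thus ?thesis by (metis blinfun_apply_blinfun_compose blinfun_apply_id_blinfun)
  qed
  have A0R0: "A0 (R0 y) = y" for y
  proof -
    have "pencil A0 A1 0 o\<^sub>L R 0 = id_blinfun" using Rinv zero_S by blast
    hence "A0 o\<^sub>L R0 = id_blinfun" by (simp only: pen0 R0_def)
    thus ?thesis by (metis blinfun_apply_blinfun_compose blinfun_apply_id_blinfun)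
  qed
  have Tneg': "\<forall>j\<le>-3. T j = 0" using Tneg by blast
  note AL = alg[of T C0 C1 A0 A1 R0, OF LI RI Tneg' A0a A1a R0A0 A0R0]
  define W where "W = (\<lambda>s v. (real s + 1) *\<^sub>R T (-2) v - T (-1) v + Vcoef (T 0) C1 s v)"
  have WS: "A0 (W (Suc s) v) + A1 (W s v) = 0" for s v
  proof -
    have "A0 (W (Suc s) v) + A1 (W s v) =
      (A0 ((real (Suc s) + 1) *\<^sub>R T (-2) v - T (-1) v) + A1 ((real s + 1) *\<^sub>R T (-2) v - T (-1) v))
      + (A0 (Vcoef (T 0) C1 (Suc s) v) + A1 (Vcoef (T 0) C1 s v))"
      unfolding W_def by (simp only: blinfun.add_right add_ac)
    thus ?thesis by (simp only: AL(2) AL(4) add_0_right)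
  qed
  have W0: "A0 (W 0 v) = v" for v using AL(3)[of v] by (simp add: W_def)
  have d0: "A0 (T (-2) d) + A1 (T (-2) d) = 0" by (simp add: A0a A1a AL(7))
  define y where "y = (\<lambda>(t::nat) \<omega>. T (-2) d + (\<Sum>s=0..t. W s (g (int t - int s) \<omega>)))"
  have y0: "A0 (y 0 \<omega>) + A1 c = g 0 \<omega>" for \<omega>
  proof -
    have "A0 (y 0 \<omega>) + A1 c = (A0 (T (-2) d) + A1 (T (-2) d)) + A0 (W 0 (g 0 \<omega>))"
      by (simp add: y_def c_def blinfun.add_right)
    thus ?thesis by (simp add: d0 W0)
  qed
  have ySuc: "A0 (y (Suc t) \<omega>) + A1 (y t \<omega>) = g (int (Suc t)) \<omega>" for t \<omega>
  proof -
    have s: "(\<Sum>s=0..Suc t. W s (g (int (Suc t) - int s) \<omega>))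
        = W 0 (g (int (Suc t)) \<omega>) + (\<Sum>s=0..t. W (Suc s) (g (int t - int s) \<omega>))"
      by (subst sum.atLeast0_atMost_Suc_shift) simp
    have "A0 (y (Suc t) \<omega>) + A1 (y t \<omega>) =
       (A0 (T (-2) d) + A1 (T (-2) d)) + A0 (W 0 (g (int (Suc t)) \<omega>))
       + (\<Sum>s=0..t. A0 (W (Suc s) (g (int t - int s) \<omega>)) + A1 (W s (g (int t - int s) \<omega>)))"
      unfolding y_def by (simp only: s blinfun.add_right blinfun.sum_right sum.distrib add_ac split_def prod.case)
    thus ?thesis by (simp add: d0 W0 WS)
  qed
  have uniq: "a = a'" if "A0 a + A1 b = G" "A0 a' + A1 b = G" for a a' b G
  proof -
    have "A0 a + A1 b = A0 a' + A1 b" using that by simp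
    hence "A0 a = A0 a'" by (rule add_right_imp_eq)
    hence "R0 (A0 a) = R0 (A0 a')" by simp
    thus ?thesis by (simp add: R0A0)
  qed
  have xy: "\<forall>\<omega>\<in>space M. x (int t) \<omega> = y t \<omega>" for t
  proof (induction t)
    case 0
    show ?case
    proof
      fix \<omega> assume \<omega>: "\<omega> \<in> space M"
      have "A0 (x 0 \<omega>) + A1 (x (0 - 1) \<omega>) = g 0 \<omega>" using x_rec[rule_format, of 0 \<omega>] \<omega> by simp
      hence "A0 (x 0 \<omega>) + A1 c = g 0 \<omega>" using x_init \<omega> by simp
      thus "x (int 0) \<omega> = y 0 \<omega>" using uniq y0 by simp
    qed
  next
    case (Suc t)
    show ?case
    proof
      fix \<omega> assume \<omega>: "\<omega> \<in> space M"
      have "A0 (x (int (Suc t)) \<omega>) + A1 (x (int (Suc t) - 1) \<omega>) = g (int (Suc t)) \<omega>"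
        using x_rec[rule_format, of "int (Suc t)" \<omega>] \<omega> by simp
      hence "A0 (x (int (Suc t)) \<omega>) + A1 (y t \<omega>) = g (int (Suc t)) \<omega>"
        using Suc \<omega> by simp
      thus "x (int (Suc t)) \<omega> = y (Suc t) \<omega>" using uniq ySuc by blast
    qed
  qed
  have Kd: "(T (-2) o\<^sub>L C0 o\<^sub>L T (-2)) d = 0" using AL(6)[of "T (-2) d"] by simp
  have yform: "y t \<omega> =
           T (-2) (\<Sum>s=0..t. real (s + 1) *\<^sub>R g (int t - int s) \<omega>)
           - T (-1) (\<Sum>s=0..t. g (int t - int s) \<omega>)
           + T (-2) d
           + real (t + 1) *\<^sub>R (T (-2) o\<^sub>L C0 o\<^sub>L T (-2)) d
           + (\<Sum>s=0..t. Vcoef (T 0) C1 s (g (int t - int s) \<omega>))" for t \<omega>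
    using AL(6)[of "T (-2) d"] by (simp add: y_def W_def blinfun.sum_right blinfun.scaleR_right sum.distrib sum_subtractf add_ac)
  have main: "\<forall>t::nat. \<forall>\<omega>\<in>space M.
         x (int t) \<omega> =
           T (-2) (\<Sum>s=0..t. real (s + 1) *\<^sub>R g (int t - int s) \<omega>)
           - T (-1) (\<Sum>s=0..t. g (int t - int s) \<omega>)
           + T (-2) d
           + real (t + 1) *\<^sub>R (T (-2) o\<^sub>L C0 o\<^sub>L T (-2)) d
           + (\<Sum>s=0..t. Vcoef (T 0) C1 s (g (int t - int s) \<omega>))"
    using xy yform by simp
  have rng: "range (blinfun_apply (T (-2))) \<subseteq> range (blinfun_apply (T (-1)))"
  proof (rule subsetI)
    fix z assume "z \<in> range (blinfun_apply (T (-2)))"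
    then obtain w where "z = T (-2) w" by blast
    thus "z \<in> range (blinfun_apply (T (-1)))" using AL(5)[of w] by simp
  qed
  have fpart: "\<forall>f :: 'x \<Rightarrow>\<^sub>L complex. clinear_op f \<and> (\<forall>u\<in>range (blinfun_apply (T (-2))). f u = 0) \<longrightarrow>
         (\<forall>t::nat. \<forall>\<omega>\<in>space M.
            f (x (int t) \<omega>) =
              - f (T (-1) (\<Sum>s=0..t. g (int t - int s) \<omega>))
              + (\<Sum>s=0..t. f (Vcoef (T 0) C1 s (g (int t - int s) \<omega>))))"
  proof (intro allI impI ballI)
    fix f :: "'x \<Rightarrow>\<^sub>L complex" and t :: nat and \<omega>
    assume hf: "clinear_op f \<and> (\<forall>u\<in>range (blinfun_apply (T (-2))). f u = 0)" and \<omega>: "\<omega> \<in> space M"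
    have fz: "f (T (-2) w) = 0" for w using hf by blast
    show "f (x (int t) \<omega>) =
              - f (T (-1) (\<Sum>s=0..t. g (int t - int s) \<omega>))
              + (\<Sum>s=0..t. f (Vcoef (T 0) C1 s (g (int t - int s) \<omega>)))"
      using main \<omega> AL(6)[of "T (-2) d"] by (simp add: fz blinfun.add_right blinfun.diff_right blinfun.sum_right)
  qed
  show ?thesis by (rule conjI[OF AL(1) conjI[OF main conjI[OF rng fpart]]])
qed

end
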